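(* Let $X$ be a compact metric space and $f: X \rightarrow X$ a continuous surjective map. Suppose there exist an infinite countable set $A=\{a_1,a_2,\dots\}\subset X$ and, for each $i\ge1$, a negative orbit $(x^i_{-n})_{n\ge 0}$ of $a_i$ (i.e. $x^i_0=a_i$ and $f(x^i_{-n-1})=x^i_{-n}$ for all $n\ge0$) such that: (i) the sets $L=\bigcup_{i\ge1}\big(\alpha((x^i_{-n})_{n\ge0},f)\cup\omega(a_i,f)\big)$ and $M=\bigcup_{i\ge1}\{x^i_{-n}: n\ge0\}$ are disjoint; (ii) for every pair $i\ne j$, $Orb((x^i_{-n})_{n\ge0},f)\cap Orb((x^j_{-n})_{n\ge0},f)=\emptyset$. Then $h(2^f)=\infty$.
   Context: $\alpha((x^i_{-n})_{n\ge0},f)$ is the set of accumulation points of the sequence $(x^i_{-n})$ as $n\to\infty$; $\omega(a_i,f)$ is the omega-limit set of $a_i$; $Orb((x^i_{-n})_{n\ge0},f)=\{x^i_{-n}:n\ge0\}\cup\{f^k(a_i):k\ge0\}$ is the full orbit through the given negative orbit. $2^X$ is the hyperspace of nonempty closed subsets with the Hausdorff metric, $2^f(B)=f(B)$, and $h$ is topological entropy. *)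

theory Defs
  imports "HOL-Analysis.Analysis"
begin

definition separated_set ::
  "('b \<Rightarrow> 'b \<Rightarrow> real) \<Rightarrow> ('b \<Rightarrow> 'b) \<Rightarrow> 'b set \<Rightarrow> nat \<Rightarrow> real \<Rightarrow> 'b set \<Rightarrow> bool" where
  "separated_set d g K n e E \<longleftrightarrow> E \<subseteq> K \<and> finite E \<and>
     (\<forall>x\<in>E. \<forall>y\<in>E. x \<noteq> y \<longrightarrow> (\<exists>k<n. d ((g ^^ k) x) ((g ^^ k) y) > e))"

definition topological_entropy ::
  "('b \<Rightarrow> 'b \<Rightarrow> real) \<Rightarrow> ('b \<Rightarrow> 'b) \<Rightarrow> 'b set \<Rightarrow> ereal" where
  "topological_entropy d g K =
     (SUP e\<in>{0<..}. limsup (\<lambda>n. SUP E\<in>{E. separated_set d g K n e E}.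
                                   ereal (ln (real (card E)) / real n)))"

definition hausdorff_dist :: "'a::metric_space set \<Rightarrow> 'a set \<Rightarrow> real" where
  "hausdorff_dist A B = max (SUP a\<in>A. infdist a B) (SUP b\<in>B. infdist b A)"

definition hyperspace :: "'a::metric_space set \<Rightarrow> 'a set set" where
  "hyperspace S = {B. B \<subseteq> S \<and> B \<noteq> {} \<and> closed B}"

text \<open>alpha-limit set of a sequence (set of accumulation points) and omega-limit set.\<close>
definition seq_accum :: "(nat \<Rightarrow> 'a::metric_space) \<Rightarrow> 'a set" where
  "seq_accum u = {y. \<exists>r. strict_mono r \<and> (\<lambda>k. u (r k)) \<longlonglongrightarrow> y}"

definition omega_limit :: "('a::metric_space \<Rightarrow> 'a) \<Rightarrow> 'a \<Rightarrow> 'a set" where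
  "omega_limit f x = seq_accum (\<lambda>k. (f ^^ k) x)"

end

theory Submission
  imports Defs
begin

lemma iter_back:
  assumes "\<And>n. f (x (Suc n)) = x n"
  shows "(f ^^ m) (x (m + p)) = x p"
proof (induction m)
  case 0 then show ?case by simp
next
  case (Suc m)
  have "(f ^^ Suc m) (x (Suc m + p)) = (f ^^ m) (f (x (Suc (m + p))))"
    by (simp only: funpow_Suc_right o_apply add_Suc)
  also have "\<dots> = (f ^^ m) (x (m + p))" using assms by simp
  finally show ?case using Suc by simp
qed

lemma iter_img: fixes f :: "'a \<Rightarrow> 'a" shows "((\<lambda>B. f ` B) ^^ n) B = (f ^^ n) ` B"
proof (induction n)
  case 0 show ?case by simp
next
  case (Suc n) then show ?case by (simp add: image_comp)
qed

lemma hd_ge1: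
  assumes "finite A" "z \<in> A"
  shows "infdist z B \<le> hausdorff_dist A B"
proof -
  have "infdist z B \<le> (SUP a\<in>A. infdist a B)"
    by (rule cSUP_upper) (use assms in auto)
  then show ?thesis unfolding hausdorff_dist_def by simp
qed

lemma hd_ge2:
  assumes "finite B" "z \<in> B"
  shows "infdist z A \<le> hausdorff_dist A B"
proof -
  have "infdist z A \<le> (SUP b\<in>B. infdist b A)"
    by (rule cSUP_upper) (use assms in auto)
  then show ?thesis unfolding hausdorff_dist_def by simp
qed

lemma infdist_ge_fin:
  assumes "A \<noteq> {}" "\<And>y. y \<in> A \<Longrightarrow> d \<le> dist z y"
  shows "d \<le> infdist z A"
  unfolding infdist_notempty[OF assms(1)]
  by (rule cINF_greatest) (use assms in auto)

theorem theorem5p11: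
  fixes S :: "'a::metric_space set" and f :: "'a \<Rightarrow> 'a"
    and a :: "nat \<Rightarrow> 'a" and x :: "nat \<Rightarrow> nat \<Rightarrow> 'a"
  assumes "compact S"
    and "continuous_on S f" and "f ` S = S"
    and "inj a" and "range a \<subseteq> S"
    and "\<And>i. x i 0 = a i"
    and "\<And>i n. x i n \<in> S"
    and "\<And>i n. f (x i (Suc n)) = x i n"
    and "(\<Union>i. seq_accum (x i) \<union> omega_limit f (a i)) \<inter> (\<Union>i. range (x i)) = {}"
    and "\<And>i j. i \<noteq> j \<Longrightarrow>
           (range (x i) \<union> range (\<lambda>k. (f ^^ k) (a i))) \<inter>
           (range (x j) \<union> range (\<lambda>k. (f ^^ k) (a j))) = {}"
  shows "topological_entropy hausdorff_dist (\<lambda>B. f ` B) (hyperspace S) = \<infinity>"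
proof -
  have xback: "\<And>l m p. (f ^^ m) (x l (m + p)) = x l p"
    by (rule iter_back) (use assms(8) in auto)
  have ajM: "\<And>j. a j \<in> (\<Union>i. range (x i))"
    using assms(6) by (metis UNIV_I UN_I rangeI)
  have notL: "\<And>j i. a j \<notin> seq_accum (x i) \<and> a j \<notin> omega_limit f (a i)"
    using assms(9) ajM by blast
  have noper: "\<And>j s. s \<ge> 1 \<Longrightarrow> (f ^^ s) (a j) \<noteq> a j"
  proof
    fix j s :: nat assume s: "s \<ge> 1" and eq: "(f ^^ s) (a j) = a j"
    have c: "(f ^^ (t * s)) (a j) = a j" for t
    proof (induction t)
      case 0 then show ?case by simp
    next
      case (Suc t)
      have "(f ^^ (Suc t * s)) (a j) = (f ^^ s) ((f ^^ (t * s)) (a j))"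
        by (simp add: funpow_add)
      then show ?case using Suc eq by simp
    qed
    have sm: "strict_mono (\<lambda>t. t * s)" using s by (auto simp: strict_mono_def)
    have "(\<lambda>t. (f ^^ (t * s)) (a j)) \<longlonglongrightarrow> a j" using c by simp
    then have "a j \<in> omega_limit f (a j)"
      unfolding omega_limit_def seq_accum_def using sm by blast
    then show False using notL by blast
  qed
  have F1: "\<And>l p j. x l p = a j \<Longrightarrow> l = j \<and> p = 0"
  proof -
    fix l p j assume eq: "x l p = a j"
    show "l = j \<and> p = 0"
    proof (cases "l = j")
      case False
      have "a j \<in> range (x l)" using eq by (metis rangeI)
      moreover have "a j \<in> range (x j)" using assms(6) by (metis rangeI)
      ultimately show ?thesis using assms(10)[OF False] by blast
    next
      case True
      show ?thesis
      proof (rule ccontr)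
        assume "\<not> (l = j \<and> p = 0)"
        then have p: "p \<ge> 1" using True by simp
        have "(f ^^ p) (x l (p + 0)) = x l 0" by (rule xback)
        then have "(f ^^ p) (a j) = a j" using eq assms(6) True by simp
        then show False using noper p by blast
      qed
    qed
  qed
  have F2: "\<And>l s j. s \<ge> 1 \<Longrightarrow> (f ^^ s) (a l) \<noteq> a j"
  proof
    fix l s j assume s: "s \<ge> (1::nat)" and eq: "(f ^^ s) (a l) = a j"
    show False
    proof (cases "l = j")
      case True then show False using noper s eq by blast
    next
      case False
      have "a j \<in> range (\<lambda>k. (f ^^ k) (a l))" using eq by (metis rangeI)
      moreover have "a j \<in> range (x j)" using assms(6) by (metis rangeI)
      ultimately show ?thesis using assms(10)[OF False] by blast
    qed
  qed
  have nl1: "\<And>j l. \<not> a j islimpt range (x l)"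
  proof
    fix j l assume "a j islimpt range (x l)"
    then obtain r :: "nat \<Rightarrow> nat" where "strict_mono r" "(x l \<circ> r) \<longlonglongrightarrow> a j"
      using islimpt_range_imp_convergent_subsequence by blast
    then have "a j \<in> seq_accum (x l)" unfolding seq_accum_def o_def by blast
    then show False using notL by blast
  qed
  have nl2: "\<And>j l. \<not> a j islimpt range (\<lambda>s. (f ^^ s) (a l))"
  proof
    fix j l assume "a j islimpt range (\<lambda>s. (f ^^ s) (a l))"
    then obtain r :: "nat \<Rightarrow> nat" where "strict_mono r" "((\<lambda>s. (f ^^ s) (a l)) \<circ> r) \<longlonglongrightarrow> a j"
      using islimpt_range_imp_convergent_subsequence by blast
    then have "a j \<in> omega_limit f (a l)" unfolding omega_limit_def seq_accum_def o_def by blast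
    then show False using notL by blast
  qed
  have iterx: "\<And>n l m. (f ^^ n) (x l m) = (if n \<le> m then x l (m - n) else (f ^^ (n - m)) (a l))"
  proof -
    fix n l m
    show "(f ^^ n) (x l m) = (if n \<le> m then x l (m - n) else (f ^^ (n - m)) (a l))"
    proof (cases "n \<le> m")
      case True
      then show ?thesis using xback[of n l "m - n"] by simp
    next
      case False
      have "(f ^^ n) (x l m) = (f ^^ (n - m)) ((f ^^ m) (x l (m + 0)))"
        using False by (metis add.right_neutral funpow_add le_add_diff_inverse2 nat_le_linear o_apply)
      also have "\<dots> = (f ^^ (n - m)) (a l)" using xback[of m l 0] assms(6) by simp
      finally show ?thesis using False by simp
    qed
  qed
  define TE where "TE = topological_entropy hausdorff_dist (\<lambda>B. f ` B) (hyperspace S)"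
  have main: "ereal (real k * ln 2) \<le> TE" if k1: "k \<ge> 1" for k :: nat
  proof -
    define P where "P = (\<Union>l\<in>{..<k}. range (x l) \<union> range (\<lambda>s. (f ^^ s) (a l)))"
    have "\<exists>e>0. \<forall>y\<in>P. y \<noteq> a j \<longrightarrow> e \<le> dist y (a j)" for j
    proof -
      have "\<not> a j islimpt P" unfolding P_def
        by (subst islimpt_finite_union_iff) (auto simp: islimpt_Un nl1 nl2)
      then show ?thesis unfolding islimpt_approachable by (meson not_le)
    qed
    then obtain e where e: "\<And>j. e j > 0" "\<And>j y. y \<in> P \<Longrightarrow> y \<noteq> a j \<Longrightarrow> e j \<le> dist y (a j)"
      by metis
    define \<delta> where "\<delta> = Min (e ` {..<k})"
    have dpos: "\<delta> > 0" unfolding \<delta>_def using k1 e(1) by (subst Min_gr_iff) (auto simp: lessThan_empty_iff)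
    have dle: "\<And>j. j < k \<Longrightarrow> \<delta> \<le> e j" unfolding \<delta>_def by auto
    have lim: "ereal (real k * ln 2) \<le> limsup (\<lambda>n. SUP E\<in>{E. separated_set hausdorff_dist (\<lambda>B. f ` B) (hyperspace S) n (\<delta>/2) E}.
                                   ereal (ln (real (card E)) / real n))"
    proof (rule le_Limsup)
      show "sequentially \<noteq> bot" by simp
      show "\<forall>\<^sub>F N in sequentially. ereal (real k * ln 2) \<le> (SUP E\<in>{E. separated_set hausdorff_dist (\<lambda>B. f ` B) (hyperspace S) N (\<delta>/2) E}.
                                   ereal (ln (real (card E)) / real N))"
        unfolding eventually_sequentially
      proof (intro exI allI impI)
        fix N :: nat assume N1: "N \<ge> 1"
        define I where "I = {..<k} \<times> {..<N}"
        define B where "B U = (\<lambda>(l, m). x l m) ` U \<union> {x 0 N}" for U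
        define E where "E = B ` Pow I"
        have key: "a j \<in> (f ^^ n) ` B U \<and> a j \<notin> (f ^^ n) ` B U' \<and>
            \<delta> \<le> infdist (a j) ((f ^^ n) ` B U')"
          if U: "U \<subseteq> I" "U' \<subseteq> I" "(j, n) \<in> U" "(j, n) \<notin> U'" for U U' j n
        proof -
          have jn: "j < k" "n < N" using U I_def by auto
          have "a j = (f ^^ n) (x j n)" using iterx[of n j n] assms(6) by simp
          moreover have "x j n \<in> B U" using U(3) unfolding B_def by force
          ultimately have in1: "a j \<in> (f ^^ n) ` B U" by blast
          have oth: "y \<in> P \<and> y \<noteq> a j" if y: "y \<in> (f ^^ n) ` B U'" for y
          proof -
            obtain l m where lm: "y = (f ^^ n) (x l m)" "(l, m) \<in> U' \<or> (l = 0 \<and> m = N)"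
              using y unfolding B_def by auto
            have lk: "l < k" using lm(2) U(2) k1 I_def by auto
            show ?thesis
            proof (cases "n \<le> m")
              case True
              then have yy: "y = x l (m - n)" using lm iterx by simp
              have "y \<in> P" unfolding P_def yy using lk by blast
              moreover have "y \<noteq> a j"
              proof
                assume "y = a j"
                then have "l = j \<and> m - n = 0" using F1[of l "m - n" j] yy by simp
                then have "l = j" "m = n" using True by auto
                then show False using lm(2) U(4) jn by auto
              qed
              ultimately show ?thesis by blast
            next
              case False
              then have yy: "y = (f ^^ (n - m)) (a l)" using lm iterx by simp
              have "y \<in> P" unfolding P_def yy using lk by blast
              moreover have "y \<noteq> a j" using F2[of "n - m" l j] False yy by simp
              ultimately show ?thesis by blast
            qed
          qed
          have ne: "(f ^^ n) ` B U' \<noteq> {}" unfolding B_def by blast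
          have "\<delta> \<le> infdist (a j) ((f ^^ n) ` B U')"
          proof (rule infdist_ge_fin[OF ne])
            fix y assume "y \<in> (f ^^ n) ` B U'"
            then have "y \<in> P" "y \<noteq> a j" using oth by auto
            then have "e j \<le> dist y (a j)" using e(2) by blast
            then show "\<delta> \<le> dist (a j) y" using dle[OF jn(1)] by (simp add: dist_commute)
          qed
          then show ?thesis using in1 oth by blast
        qed
        have finI: "finite I" unfolding I_def by simp
        have finB: "\<And>U. U \<subseteq> I \<Longrightarrow> finite (B U)"
          unfolding B_def using finI by (auto intro: finite_subset)
        have sep: "\<exists>n<N. hausdorff_dist (((\<lambda>B. f ` B) ^^ n) (B U)) (((\<lambda>B. f ` B) ^^ n) (B U')) > \<delta> / 2"
          "B U \<noteq> B U'"
          if U: "U \<subseteq> I" "U' \<subseteq> I" "U \<noteq> U'" for U U'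
        proof -
          obtain j n where jn: "((j, n) \<in> U \<and> (j, n) \<notin> U') \<or> ((j, n) \<in> U' \<and> (j, n) \<notin> U)"
            using U(3) by auto
          have nN: "n < N" using jn U I_def by auto
          have "hausdorff_dist ((f ^^ n) ` B U) ((f ^^ n) ` B U') \<ge> \<delta> \<and> B U \<noteq> B U'"
          proof (cases "(j, n) \<in> U \<and> (j, n) \<notin> U'")
            case True
            note K = key[OF U(1) U(2) True[THEN conjunct1] True[THEN conjunct2]]
            have "infdist (a j) ((f ^^ n) ` B U') \<le> hausdorff_dist ((f ^^ n) ` B U) ((f ^^ n) ` B U')"
              by (rule hd_ge1) (use K finB[OF U(1)] in auto)
            then show ?thesis using K by auto
          next
            case False
            then have F: "(j, n) \<in> U'" "(j, n) \<notin> U" using jn by auto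
            note K = key[OF U(2) U(1) F]
            have "infdist (a j) ((f ^^ n) ` B U) \<le> hausdorff_dist ((f ^^ n) ` B U) ((f ^^ n) ` B U')"
              by (rule hd_ge2) (use K finB[OF U(2)] in auto)
            then show ?thesis using K by auto
          qed
          then show "\<exists>n<N. hausdorff_dist (((\<lambda>B. f ` B) ^^ n) (B U)) (((\<lambda>B. f ` B) ^^ n) (B U')) > \<delta> / 2"
            "B U \<noteq> B U'"
            using nN dpos by (auto simp: iter_img intro!: exI[of _ n])
        qed
        have inj: "inj_on B (Pow I)" unfolding inj_on_def using sep(2) by blast
        have sepE: "separated_set hausdorff_dist (\<lambda>B. f ` B) (hyperspace S) N (\<delta>/2) E"
          unfolding separated_set_def
        proof (intro conjI ballI impI)
          show "E \<subseteq> hyperspace S"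
            unfolding E_def hyperspace_def using finB assms(7)
            by (auto intro!: finite_imp_closed simp: B_def)
          show "finite E" unfolding E_def using finI by simp
          fix X Y assume "X \<in> E" "Y \<in> E" "X \<noteq> Y"
          then obtain U U' where "U \<subseteq> I" "U' \<subseteq> I" "X = B U" "Y = B U'" "U \<noteq> U'"
            unfolding E_def by auto
          then show "\<exists>n<N. \<delta> / 2 < hausdorff_dist (((\<lambda>B. f ` B) ^^ n) X) (((\<lambda>B. f ` B) ^^ n) Y)"
            using sep(1) by blast
        qed
        have cardE: "card E = 2 ^ (k * N)"
          unfolding E_def using card_image[OF inj] finI by (simp add: card_Pow I_def card_cartesian_product)
        have "ln (real (card E)) / real N = real k * ln 2"
          using N1 by (simp add: cardE ln_realpow)
        then have "ereal (real k * ln 2) = ereal (ln (real (card E)) / real N)" by simp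
        also have "\<dots> \<le> (SUP E\<in>{E. separated_set hausdorff_dist (\<lambda>B. f ` B) (hyperspace S) N (\<delta>/2) E}.
                                   ereal (ln (real (card E)) / real N))"
          by (rule SUP_upper) (use sepE in simp)
        finally show "ereal (real k * ln 2) \<le> (SUP E\<in>{E. separated_set hausdorff_dist (\<lambda>B. f ` B) (hyperspace S) N (\<delta>/2) E}.
                                   ereal (ln (real (card E)) / real N))" .
      qed
    qed
    also have "\<dots> \<le> TE" unfolding TE_def topological_entropy_def
      by (rule SUP_upper[where f = "\<lambda>e. limsup (\<lambda>n. SUP E\<in>{E. separated_set hausdorff_dist (\<lambda>B. f ` B) (hyperspace S) n e E}.
                                   ereal (ln (real (card E)) / real n))"]) (use dpos in simp)
    finally show ?thesis .
  qed
  have "TE = \<infinity>"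
  proof (cases TE)
    case (real r)
    define k where "k = nat \<lceil>r / ln 2\<rceil> + 1"
    have "r / ln 2 < real k" unfolding k_def by linarith
    then have "r < real k * ln 2" by (simp add: field_simps)
    moreover have "ereal (real k * ln 2) \<le> TE" using main[of k] k_def by simp
    ultimately show ?thesis using real by simp
  next
    case PInf then show ?thesis by simp
  next
    case MInf then show ?thesis using main[of 1] by simp
  qed
  then show ?thesis unfolding TE_def .
qed

end
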